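(* Let $n\ge2$, let $\mathbb S^n\subset\mathbb R^{n+1}$ be the unit sphere and fix $p\in\mathbb S^n$. Let $a\in C^0([0,\infty))\cap C^\infty((0,\infty))$ satisfy $a(0)=0$, $a(t)=\dfrac{\sin(\log(\log(e/t)))}{1+\log(\log(e/t))}$ for $t\in(0,1]$, and $a(t)=0$ for $t\ge3/2$. Define $\phi:\mathbb S^n\to\mathbb R^{n+1}$ by $\phi(x)=\big(1+\tfrac12 a(|x-p|)\big)x$ and $Y=\phi(\mathbb S^n)$ (note $p\in Y$). If $k\geq 1$ and $f:\mathbb S^k\to Y$ is Lipschitz continuous (with respect to the Euclidean metric on $Y\subset\mathbb R^{n+1}$), then either $f(\mathbb S^k)=\{p\}$ or $p\notin f(\mathbb S^k)$. *)

theory Defs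
  imports "HOL-Analysis.Analysis"
begin

definition smooth_on :: "real set \<Rightarrow> (real \<Rightarrow> real) \<Rightarrow> bool" where
  "smooth_on S f \<longleftrightarrow> (\<exists>D :: nat \<Rightarrow> real \<Rightarrow> real.
      (\<forall>x\<in>S. D 0 x = f x) \<and>
      (\<forall>m. \<forall>x\<in>S. (D m has_real_derivative D (Suc m) x) (at x)))"

end

theory Submission
  imports Defs
begin

lemma core:
  fixes a T :: "real \<Rightarrow> real"
  assumes a_small: "\<And>t. 0 < t \<Longrightarrow> t \<le> 1 \<Longrightarrow>
                    a t = sin (ln (ln (exp 1 / t))) / (1 + ln (ln (exp 1 / t)))"
    and ab: "\<alpha> \<le> \<beta>" and Tc: "continuous_on {\<alpha>..\<beta>} T" and Tb: "T \<beta> = 0" and Ta: "0 < T \<alpha>"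
    and lip: "\<And>u v. u \<in> {\<alpha>..\<beta>} \<Longrightarrow> v \<in> {\<alpha>..\<beta>} \<Longrightarrow> \<bar>a (T u) - a (T v)\<bar> \<le> L * \<bar>u - v\<bar>"
  shows False
proof -
  define Lj where "Lj j = pi/2 + real j * pi" for j :: nat
  define t where "t j = exp (1 - exp (Lj j))" for j
  have Lj0: "Lj j \<ge> 0" for j unfolding Lj_def using pi_gt_zero by simp
  have tpos: "t j > 0" for j unfolding t_def by simp
  have tle1: "t j \<le> 1" for j unfolding t_def using Lj0[of j] by simp
  have tmono: "t (Suc j) \<le> t j" for j unfolding t_def Lj_def using pi_gt_zero by simp
  have at: "a (t j) = (-1)^j / (1 + Lj j)" for j
  proof -
    have "exp 1 / t j = exp (exp (Lj j))" unfolding t_def by (simp add: exp_diff[symmetric])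
    then have "ln (ln (exp 1 / t j)) = Lj j" by simp
    moreover have "sin (Lj j) = (-1)^j" unfolding Lj_def by (simp add: sin_add)
    ultimately show ?thesis using a_small[OF tpos tle1] by simp
  qed
  have diff: "\<bar>a (t j) - a (t (Suc j))\<bar> \<ge> 1 / (4 * (real j + 1))" for j
  proof -
    have p1: "1 + Lj j > 0" "1 + Lj (Suc j) > 0" using Lj0 by (auto intro: add_pos_nonneg)
    have "a (t j) - a (t (Suc j)) = (-1)^j * (1/(1 + Lj j) + 1/(1 + Lj (Suc j)))"
      unfolding at by (simp add: field_simps)
    then have "\<bar>a (t j) - a (t (Suc j))\<bar> = 1/(1 + Lj j) + 1/(1 + Lj (Suc j))"
      using p1 by (simp add: abs_mult)
    moreover have "1/(1 + Lj (Suc j)) \<ge> 0" using p1 by simp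
    moreover have "1/(1 + Lj j) \<ge> 1 / (4 * (real j + 1))"
    proof (rule divide_left_mono)
      have "real j * pi \<le> real j * 4" by (rule mult_left_mono) (use pi_less_4 in auto)
      then show "1 + Lj j \<le> 4 * (real j + 1)" unfolding Lj_def using pi_less_4 by (simp add: algebra_simps)
    qed (use p1 in auto)
    ultimately show ?thesis by linarith
  qed
  have tsmall: "t j \<le> exp (- real j)" for j
  proof -
    have "1 + Lj j \<le> exp (Lj j)" by (rule exp_ge_add_one_self)
    moreover have "real j \<le> Lj j"
    proof -
      have "real j * 1 \<le> real j * pi" by (rule mult_left_mono) (use pi_gt3 in auto)
      then show ?thesis unfolding Lj_def using pi_gt3 by simp
    qed
    ultimately have "1 - exp (Lj j) \<le> - real j" by linarith
    then show ?thesis unfolding t_def by simp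
  qed
  define K where "K = nat \<lceil>- ln (T \<alpha>)\<rceil>"
  have "t K \<le> T \<alpha>"
  proof -
    have "- ln (T \<alpha>) \<le> real K" unfolding K_def by linarith
    then have "exp (- real K) \<le> exp (ln (T \<alpha>))" by simp
    then show ?thesis using tsmall[of K] Ta by simp
  qed
  then obtain \<alpha>0 where a0: "\<alpha> \<le> \<alpha>0" "\<alpha>0 \<le> \<beta>" "T \<alpha>0 = t K"
    using IVT2'[of T \<beta> "t K" \<alpha>, OF _ _ ab Tc] Tb tpos[of K] by force
  have ind: "\<exists>u. \<alpha>0 \<le> u \<and> u \<le> \<beta> \<and> T u = t (K + n) \<and>
      (\<Sum>j<n. \<bar>a (t (K + j)) - a (t (Suc (K + j)))\<bar>) \<le> L * (u - \<alpha>0)" for n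
  proof (induction n)
    case 0
    then show ?case using a0 by auto
  next
    case (Suc n)
    then obtain u where u: "\<alpha>0 \<le> u" "u \<le> \<beta>" "T u = t (K + n)"
      "(\<Sum>j<n. \<bar>a (t (K + j)) - a (t (Suc (K + j)))\<bar>) \<le> L * (u - \<alpha>0)" by blast
    have "continuous_on {u..\<beta>} T" using Tc by (rule continuous_on_subset) (use a0 u in auto)
    then obtain u' where u': "u \<le> u'" "u' \<le> \<beta>" "T u' = t (Suc (K + n))"
      using IVT2'[of T \<beta> "t (Suc (K+n))" u] Tb tpos[of "Suc (K+n)"] tmono[of "K+n"] u by force
    have "\<bar>a (t (K + n)) - a (t (Suc (K + n)))\<bar> \<le> L * \<bar>u - u'\<bar>"
      using lip[of u u'] u u' a0 by simp
    also have "\<dots> = L * (u' - u)" using u' by simp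
    finally have "(\<Sum>j<Suc n. \<bar>a (t (K + j)) - a (t (Suc (K + j)))\<bar>) \<le> L * (u' - \<alpha>0)"
      using u(4) by (simp add: algebra_simps)
    then show ?case using u u' by (intro exI[of _ u']) auto
  qed
  have Lpos: "L \<ge> 0"
  proof -
    obtain u where u: "\<alpha>0 \<le> u"
      "(\<Sum>j<1. \<bar>a (t (K + j)) - a (t (Suc (K + j)))\<bar>) \<le> L * (u - \<alpha>0)" using ind[of 1] by blast
    have "0 < 1 / (4 * (real K + 1))" by simp
    also have "\<dots> \<le> \<bar>a (t K) - a (t (Suc K))\<bar>" by (rule diff)
    also have "\<dots> \<le> L * (u - \<alpha>0)" using u by simp
    finally show ?thesis using u by (simp add: zero_less_mult_iff)
  qed
  have bnd: "(\<Sum>j<n. 1 / (4 * (real (j + K) + 1))) \<le> L * (\<beta> - \<alpha>0)" for n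
  proof -
    obtain u where u: "\<alpha>0 \<le> u" "u \<le> \<beta>"
      "(\<Sum>j<n. \<bar>a (t (K + j)) - a (t (Suc (K + j)))\<bar>) \<le> L * (u - \<alpha>0)" using ind[of n] by blast
    have "(\<Sum>j<n. 1 / (4 * (real (j + K) + 1))) \<le> (\<Sum>j<n. \<bar>a (t (K + j)) - a (t (Suc (K + j)))\<bar>)"
      by (rule sum_mono) (simp only: add.commute[of _ K] diff)
    moreover have "L * (u - \<alpha>0) \<le> L * (\<beta> - \<alpha>0)"
      using Lpos u by (simp add: mult_left_mono)
    ultimately show ?thesis using u by linarith
  qed
  have "summable (\<lambda>j. 1 / (4 * (real (j + K) + 1)))"
    by (rule summableI_nonneg_bounded[OF _ bnd]) simp
  then have "summable (\<lambda>j. 1 / (4 * (real j + 1)))" by (rule summable_iff_shift[THEN iffD1])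
  then have "summable (\<lambda>j. 4 * (1 / (4 * (real j + 1))))" by (rule summable_mult)
  moreover have "(\<lambda>j. 4 * (1 / (4 * (real j + 1)))) = (\<lambda>j. inverse (real (Suc j)))"
    by (rule ext) (simp add: divide_simps)
  ultimately have "summable (\<lambda>j. inverse (real (Suc j)))" by simp
  then have "summable (\<lambda>j. inverse (real j))" using summable_Suc_iff[where f="\<lambda>j. inverse (real j)"] by simp
  then show False using not_summable_harmonic[where 'a=real] by simp
qed

lemma normalize_close:
  fixes y p :: "'n::euclidean_space"
  assumes p: "norm p = 1" and y: "y \<noteq> 0"
  shows "norm (y /\<^sub>R norm y - p) \<le> 2 * norm (y - p)"
proof -
  have "y /\<^sub>R norm y - y = (1 / norm y - 1) *\<^sub>R y" by (simp add: algebra_simps divide_inverse)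
  then have "norm (y /\<^sub>R norm y - y) = \<bar>1 / norm y - 1\<bar> * norm y" by simp
  also have "\<dots> = \<bar>norm y * (1 / norm y - 1)\<bar>" by (simp add: abs_mult)
  also have "\<dots> = \<bar>1 - norm y\<bar>" using y by (simp add: right_diff_distrib)
  also have "\<dots> \<le> norm (y - p)" using norm_triangle_ineq3[of y p] p by (simp add: abs_minus_commute)
  finally have "norm (y /\<^sub>R norm y - y) \<le> norm (y - p)" .
  moreover have "norm (y /\<^sub>R norm y - p) \<le> norm (y /\<^sub>R norm y - y) + norm (y - p)"
    using norm_triangle_ineq[of "y /\<^sub>R norm y - y" "y - p"] by simp
  ultimately show ?thesis by linarith
qed

lemma keyY:
  fixes a :: "real \<Rightarrow> real" and p x y :: "'n::euclidean_space"
  assumes a_large: "\<And>t. t \<ge> 3/2 \<Longrightarrow> a t = 0" and p: "norm p = 1" and x: "norm x = 1"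
    and y: "y = (1 + a (norm (x - p)) / 2) *\<^sub>R x" and close: "norm (y - p) < 1/4"
  shows "y \<noteq> 0 \<and> norm y = 1 + a (norm (y /\<^sub>R norm y - p)) / 2"
proof -
  define r where "r = 1 + a (norm (x - p)) / 2"
  have yr: "y = r *\<^sub>R x" using y r_def by simp
  have ny: "norm y = \<bar>r\<bar>" using yr x by simp
  have yne: "y \<noteq> 0"
  proof
    assume "y = 0" then show False using close p by simp
  qed
  then have rne: "r \<noteq> 0" using yr by auto
  have nc: "norm (y /\<^sub>R norm y - p) < 1/2" using normalize_close[OF p yne] close by linarith
  have rpos: "r > 0"
  proof (rule ccontr)
    assume "\<not> r > 0"
    then have rneg: "r < 0" using rne by simp
    then have "y /\<^sub>R norm y = - x" using yr ny by (simp add: scaleR_scaleR)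
    then have "norm (x + p) < 1/2" using nc by (simp add: norm_minus_commute add.commute)
    moreover have e: "(p - x) + (x + p) = 2 *\<^sub>R p" by (simp add: algebra_simps scaleR_2)
    moreover have "norm (2 *\<^sub>R p) \<le> norm (p - x) + norm (x + p)"
      using norm_triangle_ineq[of "p - x" "x + p"] unfolding e .
    moreover have "norm (2 *\<^sub>R p) = 2" using p by simp
    ultimately have "norm (x - p) \<ge> 3/2" by (simp add: norm_minus_commute)
    then have "r = 1" using a_large r_def by simp
    then show False using rneg by simp
  qed
  then have "y /\<^sub>R norm y = x" using yr ny by simp
  then show ?thesis using yne ny rpos r_def by simp
qed

lemma normalize_lip:
  fixes z w :: "'n::euclidean_space"
  assumes z: "z \<noteq> 0" and w: "w \<noteq> 0"
  shows "norm (z /\<^sub>R norm z - w /\<^sub>R norm w) \<le> 2 * norm (z - w) / norm w"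
proof -
  define y where "y = z /\<^sub>R norm w"
  have yne: "y \<noteq> 0" using z w y_def by simp
  have "y /\<^sub>R norm y = z /\<^sub>R norm z" using w unfolding y_def by simp
  moreover have "norm (w /\<^sub>R norm w) = 1" using w by simp
  ultimately have "norm (z /\<^sub>R norm z - w /\<^sub>R norm w) \<le> 2 * norm (y - w /\<^sub>R norm w)"
    using normalize_close[OF _ yne, of "w /\<^sub>R norm w"] by simp
  also have "y - w /\<^sub>R norm w = (z - w) /\<^sub>R norm w" unfolding y_def by (simp add: algebra_simps)
  finally show ?thesis using w by (simp add: divide_simps)
qed

lemma third_point:
  fixes s0 :: "'k::euclidean_space"
  assumes dimk: "DIM('k) \<ge> 2"
  shows "\<exists>w\<in>sphere 0 1. w \<noteq> s0 \<and> w \<noteq> - s0"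
proof -
  have "\<not> card (Basis :: 'k set) \<le> Suc 0" using dimk by simp
  then obtain b1 b2 :: 'k where b: "b1 \<in> Basis" "b2 \<in> Basis" "b1 \<noteq> b2"
    using card_le_Suc0_iff_eq[of "Basis :: 'k set"] by auto
  have i: "inner b1 b2 = 0" "inner b1 b1 = 1" "inner b2 b2 = 1" using b by (auto simp: inner_Basis)
  show ?thesis
  proof (cases "b1 \<noteq> s0 \<and> b1 \<noteq> - s0")
    case True then show ?thesis using b by (intro bexI[of _ b1]) auto
  next
    case False
    have "b2 \<noteq> s0 \<and> b2 \<noteq> - s0"
    proof
      show "b2 \<noteq> s0" using False i by auto
      show "b2 \<noteq> - s0" using False i by (auto simp: inner_minus_left inner_minus_right)
    qed
    then show ?thesis using b by (intro bexI[of _ b2]) auto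
  qed
qed

theorem lemma3p3:
  fixes a :: "real \<Rightarrow> real"
    and p :: "'n::euclidean_space"
    and f :: "'k::euclidean_space \<Rightarrow> 'n"
  assumes dimn: "DIM('n) \<ge> 3"
    and dimk: "DIM('k) \<ge> 2"
    and p_sph: "p \<in> sphere 0 1"
    and a_cont: "continuous_on {0..} a"
    and a_smooth: "smooth_on {0<..} a"
    and a0: "a 0 = 0"
    and a_small: "\<And>t. 0 < t \<Longrightarrow> t \<le> 1 \<Longrightarrow>
                    a t = sin (ln (ln (exp 1 / t))) / (1 + ln (ln (exp 1 / t)))"
    and a_large: "\<And>t. t \<ge> 3/2 \<Longrightarrow> a t = 0"
    and f_lip: "\<exists>C. C-lipschitz_on (sphere 0 1) f"
    and f_into: "f ` sphere 0 1 \<subseteq> (\<lambda>x. (1 + a (norm (x - p)) / 2) *\<^sub>R x) ` sphere 0 1"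
  shows "f ` sphere 0 1 = {p} \<or> p \<notin> f ` sphere 0 1"
proof (rule ccontr)
  assume nc: "\<not> (f ` sphere 0 1 = {p} \<or> p \<notin> f ` sphere 0 1)"
  have np: "norm p = 1" using p_sph by simp
  have ne: "f ` sphere 0 1 \<noteq> {p}" and pin: "p \<in> f ` sphere 0 1" using nc by auto
  obtain s0 where s0: "s0 \<in> sphere 0 1" "f s0 = p" using pin by auto
  have "\<exists>s1\<in>sphere 0 1. f s1 \<noteq> p"
  proof (rule ccontr)
    assume "\<not> (\<exists>s1\<in>sphere 0 1. f s1 \<noteq> p)"
    then have "f ` sphere 0 1 \<subseteq> {p}" by auto
    then show False using ne pin by blast
  qed
  then obtain s1 where s1: "s1 \<in> sphere 0 1" "f s1 \<noteq> p" by blast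
  obtain C where lipf: "C-lipschitz_on (sphere 0 1) f" using f_lip by blast
  have C0: "C \<ge> 0" using lipf by (rule lipschitz_on_nonneg)
  obtain w where w: "w \<in> sphere 0 1" "w \<noteq> s0" "w \<noteq> - s0" using third_point[OF dimk] by blast
  obtain x0 x1 where xs: "x0 \<in> sphere 0 1" "x1 \<in> sphere 0 1" "f x0 = p" "f x1 \<noteq> p" "x1 \<noteq> - x0"
  proof (cases "s1 = - s0")
    case False then show ?thesis using that s0 s1 by blast
  next
    case True
    show ?thesis
    proof (cases "f w = p")
      case True
      have "s1 \<noteq> - w" using \<open>s1 = - s0\<close> w by auto
      then show ?thesis using that[of w s1] True w s1 by blast
    next
      case False
      then show ?thesis using that[of s0 w] s0 w by blast
    qed
  qed
  have nx: "norm x0 = 1" "norm x1 = 1" using xs by auto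
  define i where "i = inner x0 x1"
  have "1 + i = norm (x0 + x1) ^ 2 / 2" unfolding i_def dot_norm[of x0 x1] using nx by (simp add: field_simps)
  moreover have "x0 + x1 \<noteq> 0" using xs(5) by (metis add.commute add_eq_0_iff)
  moreover have "norm (x0 + x1) ^ 2 > 0" using \<open>x0 + x1 \<noteq> 0\<close> by simp
  ultimately have ipos: "1 + i > 0" by linarith
  have ii: "inner x0 x0 = 1" "inner x1 x1 = 1" "inner x1 x0 = i"
    using nx power2_norm_eq_inner[of x0] power2_norm_eq_inner[of x1] unfolding i_def
    by (auto simp: inner_commute)
  have ile: "i \<le> 1" unfolding i_def using Cauchy_Schwarz_ineq2[of x0 x1] nx by simp
  define c where "c = (1 + i) / 2"
  have c0: "c > 0" using ipos c_def by simp
  define z where "z u = (1 - u) *\<^sub>R x1 + u *\<^sub>R x0" for u :: real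
  have zsq: "norm (z u) ^ 2 = 1 - 2 * u * (1 - u) * (1 - i)" for u
    unfolding z_def power2_norm_eq_inner
    by (simp add: inner_add_left inner_add_right ii i_def[symmetric] algebra_simps power2_eq_square)
  have zlow: "norm (z u) \<ge> sqrt c" if "0 \<le> u" "u \<le> 1" for u
  proof -
    have "4 * (u * (1 - u)) \<le> 1" using zero_le_power2[of "2*u - 1"] by (simp add: algebra_simps power2_eq_square)
    then have "2 * u * (1 - u) * (1 - i) \<le> (1/2) * (1 - i)"
      using ile by (intro mult_right_mono) auto
    then have "c \<le> norm (z u) ^ 2" using zsq[of u] c_def by (simp add: algebra_simps)
    then show ?thesis by (simp add: real_le_lsqrt real_le_rsqrt)
  qed
  have sc: "sqrt c > 0" using c0 by simp
  have zne: "z u \<noteq> 0" if "0 \<le> u" "u \<le> 1" for u using zlow[OF that] sc by auto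
  define \<gamma> where "\<gamma> u = z u /\<^sub>R norm (z u)" for u
  have \<gamma>S: "\<gamma> u \<in> sphere 0 1" if "0 \<le> u" "u \<le> 1" for u using zne[OF that] unfolding \<gamma>_def by simp
  define M where "M = 4 / sqrt c"
  have \<gamma>lip: "norm (\<gamma> u - \<gamma> v) \<le> M * \<bar>u - v\<bar>" if "u \<in> {0..1}" "v \<in> {0..1}" for u v
  proof -
    have "z u - z v = (u - v) *\<^sub>R (x0 - x1)" unfolding z_def by (simp add: algebra_simps)
    then have "norm (z u - z v) = \<bar>u - v\<bar> * norm (x0 - x1)" by simp
    also have "\<dots> \<le> \<bar>u - v\<bar> * 2"
      using norm_triangle_ineq4[of x0 x1] nx by (intro mult_left_mono) auto
    finally have dz: "norm (z u - z v) \<le> 2 * \<bar>u - v\<bar>" by simp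
    have "norm (\<gamma> u - \<gamma> v) \<le> 2 * norm (z u - z v) / norm (z v)"
      unfolding \<gamma>_def using zne that by (intro normalize_lip) auto
    also have "\<dots> \<le> 2 * norm (z u - z v) / sqrt c"
    proof (rule divide_left_mono)
      show "sqrt c \<le> norm (z v)" using zlow[of v] that by auto
      show "0 < norm (z v) * sqrt c" using zlow[of v] that sc by (intro mult_pos_pos) auto
    qed simp
    also have "\<dots> \<le> 2 * (2 * \<bar>u - v\<bar>) / sqrt c"
      using dz sc by (intro divide_right_mono) auto
    finally show ?thesis unfolding M_def by simp
  qed
  define h where "h u = f (\<gamma> u)" for u
  define K where "K = C * M"
  have K0: "K \<ge> 0" unfolding K_def M_def using C0 sc by simp
  have hlip: "norm (h u - h v) \<le> K * \<bar>u - v\<bar>" if "u \<in> {0..1}" "v \<in> {0..1}" for u v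
  proof -
    have "norm (h u - h v) \<le> C * norm (\<gamma> u - \<gamma> v)"
      using lipschitz_onD[OF lipf, of "\<gamma> u" "\<gamma> v"] \<gamma>S that unfolding h_def by (auto simp: dist_norm)
    also have "\<dots> \<le> C * (M * \<bar>u - v\<bar>)" using \<gamma>lip[OF that] C0 by (intro mult_left_mono)
    finally show ?thesis unfolding K_def by simp
  qed
  have hcont: "continuous_on {0..1} h"
  proof (rule lipschitz_on_continuous_on)
    show "K-lipschitz_on {0..1} h"
      by (rule lipschitz_onI) (use hlip K0 in \<open>auto simp: dist_norm\<close>)
  qed
  have hY: "\<exists>x\<in>sphere 0 1. h u = (1 + a (norm (x - p)) / 2) *\<^sub>R x" if "u \<in> {0..1}" for u
  proof -
    have "f (\<gamma> u) \<in> f ` sphere 0 1" using \<gamma>S[of u] that by auto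
    then show ?thesis using f_into unfolding h_def by blast
  qed
  have h1: "h 1 = p" unfolding h_def \<gamma>_def z_def using nx xs by simp
  have h0: "h 0 \<noteq> p" unfolding h_def \<gamma>_def z_def using nx xs by simp
  define Z where "Z = {u \<in> {0..1}. h u = p}"
  have Zc: "closed Z" unfolding Z_def by (rule continuous_closed_preimage_constant[OF hcont]) simp
  have Zne: "Z \<noteq> {}" using h1 unfolding Z_def by auto
  have Zb: "bdd_below Z" unfolding Z_def by (rule bdd_belowI[of _ 0]) auto
  define \<beta> where "\<beta> = Inf Z"
  have bZ: "\<beta> \<in> Z" unfolding \<beta>_def using closed_contains_Inf[OF Zne Zb Zc] .
  have hb: "h \<beta> = p" "0 \<le> \<beta>" "\<beta> \<le> 1" using bZ unfolding Z_def by auto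
  have bpos: "\<beta> > 0" using hb h0 by (cases "\<beta> = 0") auto
  have below: "h u \<noteq> p" if "0 \<le> u" "u < \<beta>" for u
  proof
    assume "h u = p"
    then have "u \<in> Z" unfolding Z_def using that hb by auto
    then have "\<beta> \<le> u" unfolding \<beta>_def using Zb by (rule cInf_lower)
    then show False using that by simp
  qed
  define d where "d = 1 / (4 * (K + 1))"
  have d0: "d > 0" unfolding d_def using K0 by simp
  have Kd: "K * d < 1/4" unfolding d_def using K0 by (simp add: field_simps)
  define \<alpha> where "\<alpha> = max 0 (\<beta> - d)"
  have ab: "\<alpha> < \<beta>" "0 \<le> \<alpha>" "\<beta> - \<alpha> \<le> d" unfolding \<alpha>_def using bpos d0 by auto
  have sub: "{\<alpha>..\<beta>} \<subseteq> {0..1}" using ab hb by auto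
  have close: "norm (h u - p) < 1/4" if "u \<in> {\<alpha>..\<beta>}" for u
  proof -
    have "norm (h u - p) \<le> K * \<bar>u - \<beta>\<bar>" using hlip[of u \<beta>] that sub hb by auto
    also have "\<dots> \<le> K * d" using that ab K0 by (intro mult_left_mono) auto
    finally show ?thesis using Kd by linarith
  qed
  define T where "T u = norm (h u /\<^sub>R norm (h u) - p)" for u
  have key: "h u \<noteq> 0 \<and> norm (h u) = 1 + a (T u) / 2" if uin: "u \<in> {\<alpha>..\<beta>}" for u
  proof -
    obtain x where x: "x \<in> sphere 0 1" "h u = (1 + a (norm (x - p)) / 2) *\<^sub>R x"
      using hY[of u] uin sub by blast
    show ?thesis unfolding T_def
      using keyY[where a=a and p=p and x=x and y="h u", OF a_large np _ x(2) close[OF uin]] x by simp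
  qed
  have Tc: "continuous_on {\<alpha>..\<beta>} T"
  proof -
    have hc: "continuous_on {\<alpha>..\<beta>} h" using hcont sub by (rule continuous_on_subset)
    have "\<forall>u\<in>{\<alpha>..\<beta>}. norm (h u) \<noteq> 0" using key by (metis norm_eq_zero)
    then show ?thesis unfolding T_def
      by (intro continuous_intros hc) auto
  qed
  have Tb: "T \<beta> = 0" unfolding T_def using hb np by simp
  have Ta: "T \<alpha> > 0"
  proof -
    have am: "\<alpha> \<in> {\<alpha>..\<beta>}" using ab by auto
    have "T \<alpha> \<noteq> 0"
    proof
      assume T0: "T \<alpha> = 0"
      then have e: "h \<alpha> /\<^sub>R norm (h \<alpha>) = p" unfolding T_def by simp
      have "norm (h \<alpha>) = 1" using key[OF am] T0 a0 by simp
      then have "h \<alpha> = p" using e by simp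
      then show False using below[of \<alpha>] ab by simp
    qed
    then show ?thesis unfolding T_def by simp
  qed
  have lip: "\<bar>a (T u) - a (T v)\<bar> \<le> (2 * K) * \<bar>u - v\<bar>" if "u \<in> {\<alpha>..\<beta>}" "v \<in> {\<alpha>..\<beta>}" for u v
  proof -
    have "\<bar>a (T u) - a (T v)\<bar> = 2 * \<bar>norm (h u) - norm (h v)\<bar>" using key[OF that(1)] key[OF that(2)] by (simp add: abs_if)
    also have "\<dots> \<le> 2 * norm (h u - h v)" using norm_triangle_ineq3[of "h u" "h v"] by simp
    also have "\<dots> \<le> 2 * (K * \<bar>u - v\<bar>)" using hlip[of u v] that sub by auto
    finally show ?thesis by simp
  qed
  show False by (rule core[OF a_small _ Tc Tb Ta lip]) (use ab in auto)
qed

end
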